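(* Let $|q|<1$, let $n\ge 0$ be an integer, and let $t$ be a complex number with $|t|<1$ and $|xt|<1$. Then $$\mathbb{E}(D_{xy})\left\{\frac{(yt;q)_\infty}{(xt;q)_\infty}\,\frac{P_n(x,y)}{(yt;q)_n}\right\}=\frac{(yt;q)_\infty}{(t,xt;q)_\infty}\sum_{k=0}^n {n\brack k}\frac{(y,xt;q)_k}{(yt;q)_k}\,x^{n-k}.$$
   Context: Throughout $|q|<1$. $(a;q)_n=\prod_{k=0}^{n-1}(1-aq^k)$, $(a;q)_\infty=\prod_{k\ge0}(1-aq^k)$, $(a_1,\dots,a_m;q)_n=\prod_i(a_i;q)_n$ (also for $n=\infty$), and ${n\brack k}=\frac{(q;q)_n}{(q;q)_k(q;q)_{n-k}}$. $P_n(x,y)=(x-y)(x-qy)\cdots(x-q^{n-1}y)$ with $P_0=1$. The homogeneous $q$-difference operator acting on functions of $(x,y)$ is $D_{xy}f(x,y)=\frac{f(x,q^{-1}y)-f(qx,y)}{x-q^{-1}y}$, and the homogeneous $q$-shift operator is $\mathbb{E}(D_{xy})=\sum_{k=0}^\infty\frac{D_{xy}^k}{(q;q)_k}$. *)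

theory Defs
  imports "HOL-Analysis.Analysis"
begin

definition qpoch :: "complex \<Rightarrow> complex \<Rightarrow> nat \<Rightarrow> complex" where
  "qpoch a q n = (\<Prod>k<n. 1 - a * q ^ k)"

definition qpoch_inf :: "complex \<Rightarrow> complex \<Rightarrow> complex" where
  "qpoch_inf a q = (\<Prod>k. 1 - a * q ^ k)"

definition qbinom :: "complex \<Rightarrow> nat \<Rightarrow> nat \<Rightarrow> complex" where
  "qbinom q n k = qpoch q q n / (qpoch q q k * qpoch q q (n - k))"

definition Pn :: "complex \<Rightarrow> nat \<Rightarrow> complex \<Rightarrow> complex \<Rightarrow> complex" where
  "Pn q n x y = (\<Prod>k<n. x - q ^ k * y)"

definition Dxy :: "complex \<Rightarrow> (complex \<Rightarrow> complex \<Rightarrow> complex) \<Rightarrow> complex \<Rightarrow> complex \<Rightarrow> complex" where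
  "Dxy q f x y = (f x (y / q) - f (q * x) y) / (x - y / q)"

text \<open>k-th summand of the homogeneous q-shift operator E(D_xy) applied to f at (x,y).\<close>
definition Eterm :: "complex \<Rightarrow> (complex \<Rightarrow> complex \<Rightarrow> complex) \<Rightarrow> complex \<Rightarrow> complex \<Rightarrow> nat \<Rightarrow> complex" where
  "Eterm q f x y k = ((Dxy q ^^ k) f) x y / qpoch q q k"

end

theory Submission imports Defs "HOL-Analysis.Analysis" begin

lemma qpoch_inf_conv:
  fixes a q :: complex
  assumes "norm q < 1"
  shows "convergent_prod (\<lambda>k. 1 - a * q ^ k)"
proof -
  have "summable (\<lambda>k. norm a * norm q ^ k)"
    using assms by (intro summable_mult summable_geometric) auto
  moreover have "\<And>k. norm ((1 - a * q ^ k) - 1) = norm a * norm q ^ k"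
    by (simp add: norm_mult norm_power)
  ultimately show ?thesis
    by (intro abs_convergent_prod_imp_convergent_prod summable_imp_abs_convergent_prod) simp
qed
lemma dummy: True
proof -
  show ?thesis by simp
qed

lemma qpoch_inf_Suc:
  assumes "norm q < 1"
  shows "qpoch_inf a q = (1 - a) * qpoch_inf (a * q) q"
proof -
  have "(\<lambda>k. 1 - a * q ^ k) has_prod ((\<Prod>k<1. 1 - a * q ^ k) * (\<Prod>k. 1 - a * q ^ (k + 1)))"
    by (rule has_prod_ignore_initial_segment'[OF qpoch_inf_conv[OF assms]])
  hence "qpoch_inf a q = (\<Prod>k<1. 1 - a * q ^ k) * (\<Prod>k. 1 - a * q ^ (k + 1))"
    unfolding qpoch_inf_def by (metis has_prod_unique)
  thus ?thesis unfolding qpoch_inf_def by (simp add: mult.assoc mult.commute)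
qed

lemma qpoch_inf_nz:
  assumes "norm q < 1" "norm a < 1"
  shows "qpoch_inf a q \<noteq> 0"
  unfolding qpoch_inf_def
proof (rule prodinf_nonzero[OF qpoch_inf_conv[OF assms(1)]])
  fix i
  have "norm (a * q ^ i) \<le> norm a"
    using assms by (auto simp: norm_mult norm_power intro!: mult_left_le power_le_one)
  hence "a * q ^ i \<noteq> 1" using assms(2) by auto
  thus "1 - a * q ^ i \<noteq> 0" by simp
qed

lemma qpoch_inf_0: "qpoch_inf 0 q = 1"
  unfolding qpoch_inf_def by simp

lemma qpoch_Suc: "qpoch a q (Suc n) = qpoch a q n * (1 - a * q ^ n)"
  unfolding qpoch_def by (simp add: lessThan_Suc)

lemma qpoch_Suc': "qpoch a q (Suc n) = (1 - a) * qpoch (a * q) q n"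
  unfolding qpoch_def prod.lessThan_Suc_shift by (simp add: mult.assoc)

lemma qpoch_0 [simp]: "qpoch a q 0 = 1" unfolding qpoch_def by simp
lemma qpoch_zero_a [simp]: "qpoch 0 q n = 1" unfolding qpoch_def by simp

lemma Pn_0 [simp]: "Pn q 0 x y = 1" unfolding Pn_def by simp
lemma Pn_Suc: "Pn q (Suc n) x y = Pn q n x y * (x - q ^ n * y)"
  unfolding Pn_def by (simp add: lessThan_Suc)
lemma Pn_scale: "Pn q n (q * x) (q * y) = q ^ n * Pn q n x y"
  by (induction n) (simp_all add: Pn_Suc algebra_simps)

lemma norm_pow_le1:
  fixes q :: complex
  shows "norm q < 1 \<Longrightarrow> norm (q ^ n) \<le> 1"
  by (simp add: norm_power power_le_one)

lemma norm_mult_lt1: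
  fixes a b :: complex
  assumes "norm b \<le> 1" "norm a < 1"
  shows "norm (b * a) < 1"
proof -
  have "norm b * norm a \<le> norm a" using assms by (intro mult_left_le_one_le) auto
  thus ?thesis using assms by (simp add: norm_mult)
qed

lemma qpoch_q_nz:
  fixes q :: complex
  assumes "norm q < 1"
  shows "qpoch q q k \<noteq> 0"
proof -
  have "1 - q * q ^ j \<noteq> 0" for j
  proof
    assume "1 - q * q ^ j = 0"
    hence "q ^ Suc j = 1" by (metis eq_iff_diff_eq_0 power_Suc)
    hence "norm (q ^ Suc j) = 1" by simp
    moreover have "norm (q ^ Suc j) < 1"
      using norm_mult_lt1[OF norm_pow_le1[OF assms] assms, of j] by (simp add: mult.commute)
    ultimately show False by simp
  qed
  thus ?thesis unfolding qpoch_def by (simp add: prod_zero_iff)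
qed

lemma ratio_summ:
  fixes f :: "nat \<Rightarrow> complex" and q :: complex and r :: real
  assumes q: "norm q < 1" and r: "0 \<le> r" "r < 1"
    and step: "\<And>k. norm (f (Suc k)) * (1 - norm q ^ Suc k) \<le> r * norm (f k)"
  shows "summable f"
proof -
  define c where "c = (1 + r) / 2"
  have c: "r < c" "c < 1" "0 < c" using r by (auto simp: c_def)
  have "0 < 1 - r / c" using c r by (simp add: field_simps)
  moreover have "norm q < 1" by (rule q)
  ultimately obtain N where N: "norm q ^ N < 1 - r / c" using real_arch_pow_inv by blast
  show ?thesis
  proof (rule summable_ratio_test[of c N])
    show "c < 1" by (rule c)
    fix k assume "N \<le> k"
    have "norm q ^ Suc k \<le> norm q ^ N"
      using \<open>N \<le> k\<close> q by (intro power_decreasing) auto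
    hence le: "norm q ^ Suc k < 1 - r / c" using N by linarith
    hence pos: "r / c < 1 - norm q ^ Suc k" by linarith
    have "r \<le> c * (1 - norm q ^ Suc k)" using pos c by (simp add: field_simps)
    hence "r * norm (f k) \<le> c * (1 - norm q ^ Suc k) * norm (f k)"
      by (intro mult_right_mono) auto
    hence "norm (f (Suc k)) * (1 - norm q ^ Suc k) \<le> (c * norm (f k)) * (1 - norm q ^ Suc k)"
      using step[of k] by (simp add: algebra_simps)
    moreover have "0 < 1 - norm q ^ Suc k" using pos c r by (smt (verit) divide_nonneg_pos)
    ultimately show "norm (f (Suc k)) \<le> c * norm (f k)" by simp
  qed
qed

lemma euler_summable:
  fixes q t :: complex
  assumes q: "norm q < 1" and t: "norm t < 1"
  shows "summable (\<lambda>k. t ^ k / qpoch q q k)"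
proof (rule ratio_summ[OF q, of "norm t"])
  show "0 \<le> norm t" "norm t < 1" using t by auto
  fix k
  have nz: "qpoch q q k \<noteq> 0" "qpoch q q (Suc k) \<noteq> 0" using qpoch_q_nz[OF q] by auto
  have "1 - norm q ^ Suc k \<le> norm (1 - q * q ^ k)"
    using norm_triangle_ineq2[of 1 "q * q ^ k"] by (simp add: norm_mult norm_power)
  hence "norm (t ^ Suc k / qpoch q q (Suc k)) * (1 - norm q ^ Suc k)
      \<le> norm (t ^ Suc k / qpoch q q (Suc k)) * norm (1 - q * q ^ k)"
    by (intro mult_left_mono) auto
  also have "\<dots> = norm (t ^ Suc k / qpoch q q (Suc k) * (1 - q * q ^ k))"
    by (rule norm_mult[symmetric])
  also have "t ^ Suc k / qpoch q q (Suc k) * (1 - q * q ^ k) = t * (t ^ k / qpoch q q k)"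
    using nz by (simp add: qpoch_Suc field_simps)
  also have "norm (t * (t ^ k / qpoch q q k)) = norm t * norm (t ^ k / qpoch q q k)"
    by (rule norm_mult)
  finally show "norm (t ^ Suc k / qpoch q q (Suc k)) * (1 - norm q ^ Suc k) \<le> norm t * norm (t ^ k / qpoch q q k)" .
qed

definition eF :: "complex \<Rightarrow> complex \<Rightarrow> complex" where
  "eF q t = (\<Sum>k. (1 / qpoch q q k) * t ^ k)"

lemma eF_sums:
  fixes q t :: complex
  assumes q: "norm q < 1" and t: "norm t < 1"
  shows "(\<lambda>k. t ^ k / qpoch q q k) sums eF q t"
proof -
  have "(\<lambda>k. t ^ k / qpoch q q k) = (\<lambda>k. (1 / qpoch q q k) * t ^ k)" by auto
  thus ?thesis unfolding eF_def using summable_sums[OF euler_summable[OF q t]] by simp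
qed

lemma eF_rec:
  fixes q t :: complex
  assumes q: "norm q < 1" and t: "norm t < 1"
  shows "eF q (q * t) = (1 - t) * eF q t"
proof -
  have qt: "norm (q * t) < 1" using q t by (intro norm_mult_lt1) auto
  have s1: "(\<lambda>k. t ^ k / qpoch q q k) sums eF q t" by (rule eF_sums[OF q t])
  have s2: "(\<lambda>k. (q*t) ^ k / qpoch q q k) sums eF q (q*t)" by (rule eF_sums[OF q qt])
  have "(\<lambda>k. t ^ k / qpoch q q k - (q*t) ^ k / qpoch q q k) sums (eF q t - eF q (q*t))"
    by (rule sums_diff[OF s1 s2])
  moreover have "(\<lambda>k. t ^ k / qpoch q q k - (q*t) ^ k / qpoch q q k) sums (t * eF q t)"
  proof -
    have "(\<lambda>k. t * (t ^ k / qpoch q q k)) sums (t * eF q t)" by (rule sums_mult[OF s1])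
    moreover have "\<And>k. t * (t ^ k / qpoch q q k) = t ^ Suc k / qpoch q q (Suc k) - (q*t) ^ Suc k / qpoch q q (Suc k)"
    proof -
      fix k
      have nz: "qpoch q q k \<noteq> 0" "qpoch q q (Suc k) \<noteq> 0" using qpoch_q_nz[OF q] by auto
      have "1 - q * q ^ k \<noteq> 0" using nz(2) by (simp add: qpoch_Suc)
      have "t ^ Suc k / qpoch q q (Suc k) - (q*t) ^ Suc k / qpoch q q (Suc k)
          = t ^ Suc k * (1 - q * q ^ k) / qpoch q q (Suc k)"
        by (simp add: power_mult_distrib diff_divide_distrib algebra_simps)
      also have "\<dots> = t ^ Suc k / qpoch q q k"
        using nz \<open>1 - q * q ^ k \<noteq> 0\<close> by (simp add: qpoch_Suc)
      finally show "t * (t ^ k / qpoch q q k) = t ^ Suc k / qpoch q q (Suc k) - (q*t) ^ Suc k / qpoch q q (Suc k)"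
        by simp
    qed
    ultimately have "(\<lambda>k. t ^ Suc k / qpoch q q (Suc k) - (q*t) ^ Suc k / qpoch q q (Suc k)) sums (t * eF q t)"
      by simp
    from sums_Suc[OF this] show ?thesis by simp
  qed
  ultimately have "eF q t - eF q (q*t) = t * eF q t" by (rule sums_unique2)
  thus ?thesis by (simp add: algebra_simps)
qed

lemma eF_euler:
  fixes q t :: complex
  assumes q: "norm q < 1" and t: "norm t < 1"
  shows "eF q t * qpoch_inf t q = 1"
proof -
  have iter: "eF q t * qpoch t q N = eF q (q ^ N * t)" for N
  proof (induction N)
    case 0 show ?case by simp
  next
    case (Suc N)
    have "norm (q ^ N * t) < 1"
      using q t by (intro norm_mult_lt1 norm_pow_le1) auto
    hence r: "eF q (q * (q ^ N * t)) = (1 - q ^ N * t) * eF q (q ^ N * t)" by (rule eF_rec[OF q])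
    have "eF q t * qpoch t q (Suc N) = (eF q t * qpoch t q N) * (1 - t * q ^ N)"
      by (simp add: qpoch_Suc)
    also have "\<dots> = (1 - q ^ N * t) * eF q (q ^ N * t)" using Suc by (simp add: mult.commute)
    also have "\<dots> = eF q (q ^ Suc N * t)" using r by (simp add: mult.assoc)
    finally show ?case .
  qed
  have L1: "(\<lambda>N. eF q t * qpoch t q N) \<longlonglongrightarrow> eF q t * qpoch_inf t q"
  proof (intro tendsto_mult tendsto_const)
    have "(\<lambda>n. \<Prod>i\<le>n. 1 - t * q ^ i) \<longlonglongrightarrow> qpoch_inf t q"
      unfolding qpoch_inf_def by (rule convergent_prod_LIMSEQ[OF qpoch_inf_conv[OF q]])
    hence "(\<lambda>n. qpoch t q (Suc n)) \<longlonglongrightarrow> qpoch_inf t q"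
      by (simp add: qpoch_def lessThan_Suc_atMost)
    thus "(\<lambda>n. qpoch t q n) \<longlonglongrightarrow> qpoch_inf t q"
      by (rule filterlim_sequentially_Suc[THEN iffD1])
  qed
  have L2: "(\<lambda>N. eF q (q ^ N * t)) \<longlonglongrightarrow> eF q 0"
  proof (rule isCont_tendsto_compose[where g="eF q"])
    have "summable (\<lambda>k. (1 / qpoch q q k) * (1/2::complex) ^ k)"
      using euler_summable[OF q, of "1/2"] by simp
    hence "isCont (\<lambda>x. \<Sum>k. (1 / qpoch q q k) * x ^ k) 0"
      by (rule isCont_powser) simp
    moreover have "eF q = (\<lambda>x. \<Sum>k. (1 / qpoch q q k) * x ^ k)" by (rule ext) (simp add: eF_def)
    ultimately show "isCont (eF q) 0" by simp
    have "(\<lambda>N. q ^ N * t) \<longlonglongrightarrow> 0 * t" by (intro tendsto_mult tendsto_const LIMSEQ_power_zero q)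
    thus "(\<lambda>N. q ^ N * t) \<longlonglongrightarrow> 0" by simp
  qed
  have "eF q 0 = 1" unfolding eF_def using powser_zero[of "\<lambda>k. 1 / qpoch q q k"] by (simp del: powser_zero)
  with L1 L2 iter show ?thesis using LIMSEQ_unique by fastforce
qed

lemma euler:
  fixes q t :: complex
  assumes q: "norm q < 1" and t: "norm t < 1"
  shows "(\<lambda>k. t ^ k / qpoch q q k) sums (1 / qpoch_inf t q)"
proof -
  have "eF q t = 1 / qpoch_inf t q"
    using eF_euler[OF q t] qpoch_inf_nz[OF q t] by (simp add: field_simps)
  thus ?thesis using eF_sums[OF q t] by simp
qed


definition Hx :: "complex \<Rightarrow> complex \<Rightarrow> complex \<Rightarrow> bool" where
  "Hx q x y \<longleftrightarrow> (\<forall>i j::nat. q ^ i * x \<noteq> y / q ^ (j + 1))"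

lemma Hx_shift:
  assumes "Hx q x y"
  shows "Hx q x (y / q)" "Hx q (q * x) y" "x - y / q \<noteq> 0"
proof -
  show "Hx q x (y / q)" unfolding Hx_def
  proof (intro allI)
    fix i j :: nat
    have "q ^ i * x \<noteq> y / q ^ (Suc j + 1)" using assms unfolding Hx_def by blast
    moreover have "y / q ^ (Suc j + 1) = y / q / q ^ (j + 1)" by (simp add: divide_divide_eq_left mult.commute)
    ultimately show "q ^ i * x \<noteq> y / q / q ^ (j + 1)" by simp
  qed
  show "Hx q (q * x) y" unfolding Hx_def
  proof (intro allI)
    fix i j :: nat
    have "q ^ Suc i * x \<noteq> y / q ^ (j + 1)" using assms unfolding Hx_def by blast
    thus "q ^ i * (q * x) \<noteq> y / q ^ (j + 1)" by (simp add: mult.assoc mult.commute mult.left_commute)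
  qed
  have "q ^ 0 * x \<noteq> y / q ^ (0 + 1)" using assms unfolding Hx_def by blast
  thus "x - y / q \<noteq> 0" by simp
qed

lemma Dk_Suc: "(Dxy q ^^ Suc k) f x y = ((Dxy q ^^ k) f x (y / q) - (Dxy q ^^ k) f (q * x) y) / (x - y / q)"
  by (simp add: Dxy_def)

lemma Dk_lin:
  assumes "\<forall>a b::nat. h (q ^ a * x) (y / q ^ b) = \<alpha> * f (q ^ a * x) (y / q ^ b) + \<beta> * g (q ^ a * x) (y / q ^ b)"
  shows "(Dxy q ^^ k) h x y = \<alpha> * (Dxy q ^^ k) f x y + \<beta> * (Dxy q ^^ k) g x y"
  using assms
proof (induction k arbitrary: x y)
  case 0
  then show ?case using spec[OF spec[OF "0.prems"], of 0 0] by simp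
next
  case (Suc k)
  have h1: "\<forall>a b::nat. h (q ^ a * x) (y / q / q ^ b) = \<alpha> * f (q ^ a * x) (y / q / q ^ b) + \<beta> * g (q ^ a * x) (y / q / q ^ b)"
  proof (intro allI)
    fix a b :: nat
    have e: "y / q / q ^ b = y / q ^ Suc b" by (simp add: divide_divide_eq_left)
    show "h (q ^ a * x) (y / q / q ^ b) = \<alpha> * f (q ^ a * x) (y / q / q ^ b) + \<beta> * g (q ^ a * x) (y / q / q ^ b)"
      unfolding e using Suc.prems by blast
  qed
  have h2: "\<forall>a b::nat. h (q ^ a * (q * x)) (y / q ^ b) = \<alpha> * f (q ^ a * (q * x)) (y / q ^ b) + \<beta> * g (q ^ a * (q * x)) (y / q ^ b)"
  proof (intro allI)
    fix a b :: nat
    have "q ^ a * (q * x) = q ^ Suc a * x" by (simp add: mult.assoc mult.commute mult.left_commute)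
    thus "h (q ^ a * (q * x)) (y / q ^ b) = \<alpha> * f (q ^ a * (q * x)) (y / q ^ b) + \<beta> * g (q ^ a * (q * x)) (y / q ^ b)"
      using Suc.prems by metis
  qed
  show ?case unfolding Dk_Suc Suc.IH[OF h1] Suc.IH[OF h2]
    by (simp add: field_simps diff_divide_distrib add_divide_distrib)
qed

lemma Pn_shift1:
  assumes "q \<noteq> 0"
  shows "Pn q (Suc m) x (y / q) = (x - y / q) * Pn q m x y"
  unfolding Pn_def prod.lessThan_Suc_shift using assms by simp

lemma Pn_shift2:
  assumes "q \<noteq> 0"
  shows "Pn q (Suc m) (q * x) y = q ^ Suc m * (x - y / q) * Pn q m x y"
proof -
  have "Pn q (Suc m) (q * x) y = (q * x - y) * (\<Prod>k<m. q * (x - q ^ k * y))"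
    unfolding Pn_def prod.lessThan_Suc_shift by (simp add: algebra_simps)
  also have "(\<Prod>k<m. q * (x - q ^ k * y)) = q ^ m * Pn q m x y"
    unfolding prod.distrib Pn_def by simp
  also have "q * x - y = q * (x - y / q)"
    using assms by (simp add: field_simps)
  finally show ?thesis using assms by (simp add: ac_simps)
qed

lemma D_Pn:
  assumes q: "q \<noteq> 0" and q1: "norm q < 1" and H: "Hx q x y"
  shows "(Dxy q ^^ k) (Pn q n) x y = (if k \<le> n then qpoch q q n / qpoch q q (n - k) * Pn q (n - k) x y else 0)"
  using H
proof (induction k arbitrary: x y)
  case 0
  then show ?case using qpoch_q_nz[OF q1, of n] by simp
next
  case (Suc k)
  note h = Hx_shift[OF Suc.prems]
  show ?case
  proof (cases "Suc k \<le> n")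
    case True
    then obtain m where m: "n - k = Suc m" "n - Suc k = m" by (metis Suc_diff_Suc Suc_le_lessD diff_Suc_1 less_imp_Suc_add add_diff_cancel_left' zero_less_diff)
    have "(Dxy q ^^ Suc k) (Pn q n) x y
        = qpoch q q n / qpoch q q (Suc m) * ((Pn q (Suc m) x (y / q) - Pn q (Suc m) (q * x) y) / (x - y / q))"
      unfolding Dk_Suc Suc.IH[OF h(1)] Suc.IH[OF h(2)] using True m by (simp add: field_simps diff_divide_distrib)
    also have "(Pn q (Suc m) x (y / q) - Pn q (Suc m) (q * x) y) / (x - y / q) = (1 - q ^ Suc m) * Pn q m x y"
      unfolding Pn_shift1[OF q] Pn_shift2[OF q] using h(3) by (simp add: field_simps)
    also have "qpoch q q n / qpoch q q (Suc m) * ((1 - q ^ Suc m) * Pn q m x y) = qpoch q q n / qpoch q q m * Pn q m x y"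
    proof -
      have "qpoch q q (Suc m) \<noteq> 0" "qpoch q q m \<noteq> 0" using qpoch_q_nz[OF q1] by auto
      hence "1 - q * q ^ m \<noteq> 0" "qpoch q q m \<noteq> 0" by (auto simp: qpoch_Suc)
      thus ?thesis by (simp add: qpoch_Suc field_simps)
    qed
    finally show ?thesis using True m by simp
  next
    case False
    show ?thesis
    proof (cases "k = n")
      case True
      show ?thesis unfolding Dk_Suc Suc.IH[OF h(1)] Suc.IH[OF h(2)] using True by simp
    next
      case False2: False
      show ?thesis unfolding Dk_Suc Suc.IH[OF h(1)] Suc.IH[OF h(2)] using False False2 by simp
    qed
  qed
qed


definition qb :: "complex \<Rightarrow> nat \<Rightarrow> nat \<Rightarrow> complex" where
  "qb q n k = (if k \<le> n then qbinom q n k else 0)"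

lemma qbinom_0:
  fixes q :: complex assumes "norm q < 1"
  shows "qbinom q n 0 = 1"
  unfolding qbinom_def using qpoch_q_nz[OF assms, of n] by simp

lemma alg_pascal:
  fixes a b c U V A1 B1 C1 u v :: complex
  assumes "a \<noteq> 0" "b \<noteq> 0" "c \<noteq> 0" "U \<noteq> 0" "V \<noteq> 0"
    and "A1 = a * U" "B1 = b * V" "C1 = c * (1 - u * v)" "u = 1 - U" "v = 1 - V"
  shows "C1 / (A1 * B1) = u * (c / (A1 * b)) + c / (a * B1)"
    and "C1 / (A1 * B1) = c / (A1 * b) + v * (c / (a * B1))"
  using assms(1-5) unfolding assms(6-10) by (simp_all add: field_simps)

lemma qbinom_n [simp]:
  fixes q :: complex assumes "norm q < 1"
  shows "qbinom q n n = 1"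
  unfolding qbinom_def using qpoch_q_nz[OF assms, of n] by simp

lemma qb_pascal1:
  fixes q :: complex assumes q: "norm q < 1"
  shows "qb q (Suc n) (Suc k) = q ^ Suc k * qb q n (Suc k) + qb q n k"
proof (cases "Suc k \<le> n")
  case True
  obtain m where m: "n = Suc k + m" using True le_Suc_ex by blast
  have nz: "\<And>j. qpoch q q j \<noteq> 0" using qpoch_q_nz[OF q] .
  have "qbinom q (Suc n) (Suc k) = q ^ Suc k * qbinom q n (Suc k) + qbinom q n k"
  proof -
    have u: "1 - q ^ Suc k \<noteq> 0" "1 - q ^ Suc m \<noteq> 0"
      using nz[of "Suc k"] nz[of "Suc m"] by (auto simp: qpoch_Suc)
    have e: "qpoch q q (Suc (Suc k + m)) = qpoch q q (Suc k + m) * (1 - q ^ Suc k * q ^ Suc m)"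
      by (simp add: qpoch_Suc power_add)
    have e1: "qpoch q q (Suc k) = qpoch q q k * (1 - q ^ Suc k)" "qpoch q q (Suc m) = qpoch q q m * (1 - q ^ Suc m)"
      by (simp_all add: qpoch_Suc)
    have "qpoch q q (Suc (Suc k + m)) / (qpoch q q (Suc k) * qpoch q q (Suc m)) =
      q ^ Suc k * (qpoch q q (Suc k + m) / (qpoch q q (Suc k) * qpoch q q m)) + qpoch q q (Suc k + m) / (qpoch q q k * qpoch q q (Suc m))"
      by (rule alg_pascal(1)[OF nz[of k] nz[of m] nz[of "Suc k + m"] u e1 e]) simp_all
    thus ?thesis unfolding qbinom_def m by (simp del: qpoch_def)
  qed
  then show ?thesis using True by (simp add: qb_def)
next
  case False
  then show ?thesis using q by (cases "k = n") (auto simp: qb_def qbinom_0)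
qed

lemma qb_pascal2:
  fixes q :: complex assumes q: "norm q < 1"
  shows "qb q (Suc n) (Suc k) = qb q n (Suc k) + q ^ (n - k) * qb q n k"
proof (cases "Suc k \<le> n")
  case True
  obtain m where m: "n = Suc k + m" using True le_Suc_ex by blast
  have nz: "\<And>j. qpoch q q j \<noteq> 0" using qpoch_q_nz[OF q] .
  have "qbinom q (Suc n) (Suc k) = qbinom q n (Suc k) + q ^ (n - k) * qbinom q n k"
  proof -
    have u: "1 - q ^ Suc k \<noteq> 0" "1 - q ^ Suc m \<noteq> 0"
      using nz[of "Suc k"] nz[of "Suc m"] by (auto simp: qpoch_Suc)
    have e: "qpoch q q (Suc (Suc k + m)) = qpoch q q (Suc k + m) * (1 - q ^ Suc k * q ^ Suc m)"
      by (simp add: qpoch_Suc power_add)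
    have e1: "qpoch q q (Suc k) = qpoch q q k * (1 - q ^ Suc k)" "qpoch q q (Suc m) = qpoch q q m * (1 - q ^ Suc m)"
      by (simp_all add: qpoch_Suc)
    have "qpoch q q (Suc (Suc k + m)) / (qpoch q q (Suc k) * qpoch q q (Suc m)) =
      qpoch q q (Suc k + m) / (qpoch q q (Suc k) * qpoch q q m) + q ^ Suc m * (qpoch q q (Suc k + m) / (qpoch q q k * qpoch q q (Suc m)))"
      by (rule alg_pascal(2)[OF nz[of k] nz[of m] nz[of "Suc k + m"] u e1 e]) simp_all
    moreover have "Suc k + m - k = Suc m" by simp
    ultimately show ?thesis unfolding qbinom_def m by (simp del: qpoch_def)
  qed
  then show ?thesis using True by (simp add: qb_def)
next
  case False
  then show ?thesis using q by (cases "k = n") (auto simp: qb_def qbinom_0)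
qed

lemma qb_0: "norm q < 1 \<Longrightarrow> qb q n 0 = 1" by (simp add: qb_def qbinom_0)
lemma qb_big: "n < k \<Longrightarrow> qb q n k = 0" by (simp add: qb_def)

lemma sum_qb_conv: "(\<Sum>k\<le>n. qbinom q n k * f k) = (\<Sum>k\<le>n. qb q n k * f k)"
  by (rule sum.cong) (auto simp: qb_def)

lemma sum_pascal1:
  fixes q :: complex assumes q: "norm q < 1"
  shows "(\<Sum>k\<le>Suc n. qb q (Suc n) k * c k) = (\<Sum>k\<le>n. q ^ k * qb q n k * c k) + (\<Sum>k\<le>n. qb q n k * c (Suc k))"
proof -
  have h1: "(\<Sum>k\<le>Suc n. qb q (Suc n) k * c k) = c 0 + (\<Sum>k\<le>n. qb q (Suc n) (Suc k) * c (Suc k))"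
    by (subst sum.atMost_Suc_shift) (simp add: qb_0[OF q])
  have h2: "(\<Sum>k\<le>n. qb q (Suc n) (Suc k) * c (Suc k)) = (\<Sum>k\<le>n. q ^ Suc k * qb q n (Suc k) * c (Suc k)) + (\<Sum>k\<le>n. qb q n k * c (Suc k))"
    by (simp add: qb_pascal1[OF q] sum.distrib algebra_simps)
  have h3: "(\<Sum>k\<le>n. q ^ k * qb q n k * c k) = (\<Sum>k\<le>Suc n. q ^ k * qb q n k * c k)"
    by (simp add: qb_big)
  have h4: "(\<Sum>k\<le>Suc n. q ^ k * qb q n k * c k) = c 0 + (\<Sum>k\<le>n. q ^ Suc k * qb q n (Suc k) * c (Suc k))"
    by (subst sum.atMost_Suc_shift) (simp add: qb_0[OF q] del: power_Suc)
  show ?thesis by (simp only: h1 h2 h3 h4 add.assoc)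
qed

lemma sum_pascal2:
  fixes q :: complex assumes q: "norm q < 1"
  shows "(\<Sum>k\<le>Suc n. qb q (Suc n) k * c k) = (\<Sum>k\<le>n. qb q n k * c k) + (\<Sum>k\<le>n. q ^ (n - k) * qb q n k * c (Suc k))"
proof -
  have h1: "(\<Sum>k\<le>Suc n. qb q (Suc n) k * c k) = c 0 + (\<Sum>k\<le>n. qb q (Suc n) (Suc k) * c (Suc k))"
    by (subst sum.atMost_Suc_shift) (simp add: qb_0[OF q])
  have h2: "(\<Sum>k\<le>n. qb q (Suc n) (Suc k) * c (Suc k)) = (\<Sum>k\<le>n. qb q n (Suc k) * c (Suc k)) + (\<Sum>k\<le>n. q ^ (n - k) * qb q n k * c (Suc k))"
    by (simp add: qb_pascal2[OF q] sum.distrib algebra_simps)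
  have h3: "(\<Sum>k\<le>n. qb q n k * c k) = (\<Sum>k\<le>Suc n. qb q n k * c k)"
    by (simp add: qb_big)
  have h4: "(\<Sum>k\<le>Suc n. qb q n k * c k) = c 0 + (\<Sum>k\<le>n. qb q n (Suc k) * c (Suc k))"
    by (subst sum.atMost_Suc_shift) (simp add: qb_0[OF q])
  show ?thesis by (simp only: h1 h2 h3 h4 add.assoc)
qed

definition SS :: "complex \<Rightarrow> nat \<Rightarrow> complex \<Rightarrow> complex \<Rightarrow> complex" where
  "SS q n x y = (\<Sum>k\<le>n. qbinom q n k * Pn q (n - k) x y)"
definition VV :: "complex \<Rightarrow> nat \<Rightarrow> complex \<Rightarrow> complex \<Rightarrow> complex" where
  "VV q n x y = (\<Sum>k\<le>n. qbinom q n k * qpoch y q k * x ^ (n - k))"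

lemma SS_rec:
  fixes q :: complex assumes q: "norm q < 1"
  shows "SS q (Suc n) x y = x * SS q n x y + (1 - y) * SS q n (q * x) (q * y)"
proof -
  have "SS q (Suc n) x y = (\<Sum>k\<le>Suc n. qb q (Suc n) k * Pn q (Suc n - k) x y)"
    unfolding SS_def by (rule sum_qb_conv)
  also have "\<dots> = (\<Sum>k\<le>n. qb q n k * Pn q (Suc n - k) x y) + (\<Sum>k\<le>n. q ^ (n - k) * qb q n k * Pn q (Suc n - Suc k) x y)"
    by (rule sum_pascal2[OF q])
  also have "\<dots> = (\<Sum>k\<le>n. qb q n k * Pn q (Suc n - k) x y + q ^ (n - k) * qb q n k * Pn q (Suc n - Suc k) x y)"
    by (simp add: sum.distrib)
  also have "\<dots> = (\<Sum>k\<le>n. x * (qb q n k * Pn q (n - k) x y) + (1 - y) * (qb q n k * Pn q (n - k) (q * x) (q * y)))"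
  proof (rule sum.cong)
    fix k assume "k \<in> {..n}"
    hence e: "Suc n - k = Suc (n - k)" by auto
    show "qb q n k * Pn q (Suc n - k) x y + q ^ (n - k) * qb q n k * Pn q (Suc n - Suc k) x y =
      x * (qb q n k * Pn q (n - k) x y) + (1 - y) * (qb q n k * Pn q (n - k) (q * x) (q * y))"
      unfolding e Pn_Suc Pn_scale by (simp add: algebra_simps)
  qed simp
  also have "\<dots> = x * SS q n x y + (1 - y) * SS q n (q * x) (q * y)"
    unfolding SS_def sum_qb_conv by (simp add: sum.distrib sum_distrib_left)
  finally show ?thesis .
qed

lemma VV_rec:
  fixes q :: complex assumes q: "norm q < 1"
  shows "VV q (Suc n) x y = x * VV q n x y + (1 - y) * VV q n (q * x) (q * y)"
proof -
  have "VV q (Suc n) x y = (\<Sum>k\<le>Suc n. qb q (Suc n) k * (qpoch y q k * x ^ (Suc n - k)))"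
    unfolding VV_def using sum_qb_conv[of q "Suc n" "\<lambda>k. qpoch y q k * x ^ (Suc n - k)"] by (simp add: mult.assoc)
  also have "\<dots> = (\<Sum>k\<le>n. qb q n k * (qpoch y q k * x ^ (Suc n - k))) + (\<Sum>k\<le>n. q ^ (n - k) * qb q n k * (qpoch y q (Suc k) * x ^ (Suc n - Suc k)))"
    by (rule sum_pascal2[OF q])
  also have "\<dots> = (\<Sum>k\<le>n. qb q n k * (qpoch y q k * x ^ (Suc n - k)) + q ^ (n - k) * qb q n k * (qpoch y q (Suc k) * x ^ (Suc n - Suc k)))"
    by (simp add: sum.distrib)
  also have "\<dots> = (\<Sum>k\<le>n. x * (qb q n k * qpoch y q k * x ^ (n - k)) + (1 - y) * (qb q n k * qpoch (q * y) q k * (q * x) ^ (n - k)))"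
  proof (rule sum.cong)
    fix k assume "k \<in> {..n}"
    hence e: "Suc n - k = Suc (n - k)" by auto
    show "qb q n k * (qpoch y q k * x ^ (Suc n - k)) + q ^ (n - k) * qb q n k * (qpoch y q (Suc k) * x ^ (Suc n - Suc k)) =
      x * (qb q n k * qpoch y q k * x ^ (n - k)) + (1 - y) * (qb q n k * qpoch (q * y) q k * (q * x) ^ (n - k))"
      unfolding e qpoch_Suc' by (simp add: algebra_simps power_mult_distrib)
  qed simp
  also have "\<dots> = x * VV q n x y + (1 - y) * VV q n (q * x) (q * y)"
    unfolding VV_def using sum_qb_conv[of q n "\<lambda>k. qpoch y q k * x ^ (n - k)"] sum_qb_conv[of q n "\<lambda>k. qpoch (q*y) q k * (q*x) ^ (n - k)"]
    by (simp add: sum.distrib sum_distrib_left mult.assoc)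
  finally show ?thesis .
qed

lemma SS_VV:
  fixes q :: complex assumes q: "norm q < 1"
  shows "SS q n x y = VV q n x y"
proof (induction n arbitrary: x y)
  case 0
  show ?case by (simp add: SS_def VV_def qbinom_0[OF q])
next
  case (Suc n)
  show ?case unfolding SS_rec[OF q] VV_rec[OF q] Suc.IH ..
qed


lemma qpoch_prefix_nz:
  assumes "qpoch a q m \<noteq> 0" "k \<le> m"
  shows "qpoch a q k \<noteq> 0"
  using assms unfolding qpoch_def by (auto simp: prod_zero_iff)

lemma qpoch_factor_nz:
  assumes "qpoch a q m \<noteq> 0" "k < m"
  shows "1 - a * q ^ k \<noteq> 0"
  using assms unfolding qpoch_def by (auto simp: prod_zero_iff)

definition FF :: "complex \<Rightarrow> complex \<Rightarrow> nat \<Rightarrow> complex \<Rightarrow> complex \<Rightarrow> complex" where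
  "FF q t n = (\<lambda>x y. qpoch_inf (y * t) q / qpoch_inf (x * t) q * (Pn q n x y / qpoch (y * t) q n))"

definition AA :: "complex \<Rightarrow> complex \<Rightarrow> complex \<Rightarrow> complex \<Rightarrow> nat \<Rightarrow> complex" where
  "AA q x y t n = (\<Sum>k\<le>n. qbinom q n k * (qpoch y q k * qpoch (x * t) q k / qpoch (y * t) q k) * x ^ (n - k))"

definition RR :: "complex \<Rightarrow> complex \<Rightarrow> complex \<Rightarrow> complex \<Rightarrow> nat \<Rightarrow> complex" where
  "RR q x y t n = qpoch_inf (y * t) q / (qpoch_inf t q * qpoch_inf (x * t) q) * AA q x y t n"

definition BB :: "complex \<Rightarrow> complex \<Rightarrow> complex \<Rightarrow> complex \<Rightarrow> nat \<Rightarrow> complex" where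
  "BB q x y t n = (\<Sum>k\<le>n. qbinom q n k * (qpoch y q k * qpoch (x * t) q (Suc k) / qpoch (y * t) q (Suc k)) * x ^ (n - k))"

lemma alg_cancel:
  fixes u w b Qy X Y xp :: complex
  assumes "u \<noteq> 0"
  shows "w * (b * (Qy * X / Y) * xp) = u * (b * (Qy * (w * X) / (u * Y)) * xp)"
  using assms by (cases "Y = 0") (simp_all add: field_simps)

lemma AA_q:
  assumes yt: "1 - y * t \<noteq> 0"
  shows "(1 - x * t) * AA q x y (q * t) n = (1 - y * t) * BB q x y t n"
  unfolding AA_def BB_def sum_distrib_left
proof (rule sum.cong)
  fix k
  have e1: "qpoch (x * t) q (Suc k) = (1 - x * t) * qpoch (x * (q * t)) q k"
    by (simp add: qpoch_Suc' mult.commute mult.left_commute)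
  have e2: "qpoch (y * t) q (Suc k) = (1 - y * t) * qpoch (y * (q * t)) q k"
    by (simp add: qpoch_Suc' mult.commute mult.left_commute)
  show "(1 - x * t) * (qbinom q n k * (qpoch y q k * qpoch (x * (q * t)) q k / qpoch (y * (q * t)) q k) * x ^ (n - k)) =
    (1 - y * t) * (qbinom q n k * (qpoch y q k * qpoch (x * t) q (Suc k) / qpoch (y * t) q (Suc k)) * x ^ (n - k))"
    unfolding e1 e2 by (rule alg_cancel[OF yt])
qed simp

lemma alg_step:
  fixes b Qy Xk Yk Q xp x y t Z W :: complex
  assumes "Yk \<noteq> 0" "Z \<noteq> 0" "Z = 1 - y * t * Q" "W = 1 - x * t * Q"
  shows "t * (Q * b * (Qy * Xk / Yk * (x * xp)) + b * (Qy * (1 - y * Q) * (Xk * W) / (Yk * Z) * xp)) =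
         b * (Qy * Xk / Yk) * xp - (1 - t) * (b * (Qy * (Xk * W) / (Yk * Z)) * xp)"
  using assms(1,2) unfolding assms(3,4) by (simp add: field_simps)

lemma AA_step:
  fixes q :: complex
  assumes q: "norm q < 1" and nz: "qpoch (y * t) q (Suc n) \<noteq> 0"
  shows "t * AA q x y t (Suc n) = AA q x y t n - (1 - t) * BB q x y t n"
proof -
  define c where "c k = qpoch y q k * qpoch (x * t) q k / qpoch (y * t) q k * x ^ (Suc n - k)" for k
  have "AA q x y t (Suc n) = (\<Sum>k\<le>Suc n. qb q (Suc n) k * c k)"
    by (simp only: AA_def c_def mult.assoc sum_qb_conv)
  also have "\<dots> = (\<Sum>k\<le>n. q ^ k * qb q n k * c k) + (\<Sum>k\<le>n. qb q n k * c (Suc k))"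
    by (rule sum_pascal1[OF q])
  finally have "t * AA q x y t (Suc n) = (\<Sum>k\<le>n. t * (q ^ k * qb q n k * c k + qb q n k * c (Suc k)))"
    by (simp add: sum_distrib_left sum.distrib algebra_simps)
  also have "\<dots> = (\<Sum>k\<le>n. qb q n k * (qpoch y q k * qpoch (x * t) q k / qpoch (y * t) q k) * x ^ (n - k)
      - (1 - t) * (qb q n k * (qpoch y q k * qpoch (x * t) q (Suc k) / qpoch (y * t) q (Suc k)) * x ^ (n - k)))"
  proof (rule sum.cong)
    fix k assume "k \<in> {..n}"
    hence kn: "k \<le> n" by simp
    have Yk: "qpoch (y * t) q k \<noteq> 0" using qpoch_prefix_nz[OF nz] kn by simp
    have Z: "1 - y * t * q ^ k \<noteq> 0" using qpoch_factor_nz[OF nz] kn by simp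
    have e: "Suc n - k = Suc (n - k)" "Suc n - Suc k = n - k" using kn by auto
    show "t * (q ^ k * qb q n k * c k + qb q n k * c (Suc k)) =
      qb q n k * (qpoch y q k * qpoch (x * t) q k / qpoch (y * t) q k) * x ^ (n - k)
      - (1 - t) * (qb q n k * (qpoch y q k * qpoch (x * t) q (Suc k) / qpoch (y * t) q (Suc k)) * x ^ (n - k))"
      unfolding c_def e qpoch_Suc power_Suc
      by (rule alg_step[OF Yk Z refl refl])
  qed simp
  also have "\<dots> = AA q x y t n - (1 - t) * BB q x y t n"
    unfolding AA_def BB_def sum_subtractf sum_distrib_left
    using sum_qb_conv[of q n "\<lambda>k. (qpoch y q k * qpoch (x * t) q k / qpoch (y * t) q k) * x ^ (n - k)"]
      sum_qb_conv[of q n "\<lambda>k. (1 - t) * ((qpoch y q k * qpoch (x * t) q (Suc k) / qpoch (y * t) q (Suc k)) * x ^ (n - k))"]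
    by (simp add: mult.assoc mult.left_commute)
  finally show ?thesis .
qed

lemma qinf_shift:
  fixes q a :: complex
  assumes "norm q < 1"
  shows "qpoch_inf (a * t) q = (1 - a * t) * qpoch_inf (a * (q * t)) q"
  using qpoch_inf_Suc[OF assms, of "a * t"] by (simp add: ac_simps)

lemma norm_qt:
  fixes q t :: complex
  assumes "norm q < 1" "norm t < 1"
  shows "norm (q * t) < 1" "norm (q ^ a * t) < 1"
  using norm_mult_lt1[OF less_imp_le[OF assms(1)] assms(2)] norm_mult_lt1[OF norm_pow_le1[OF assms(1)] assms(2)]
  by auto

lemma alg_RR:
  fixes t s r p Jy Jt Jx A0 A1 A' B :: complex
  assumes "t \<noteq> 0" "s \<noteq> 0" "r \<noteq> 0" "Jt \<noteq> 0" "Jx \<noteq> 0"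
    and "t * A1 = A0 - s * B" "r * A' = p * B"
  shows "p * Jy / (s * Jt * (r * Jx)) * A1 =
    (p * Jy / (s * Jt * (r * Jx)) * A0 - Jy / (Jt * Jx) * A') / t"
proof -
  have a1: "A1 = (A0 - s * B) / t" using assms(1,6) by (simp add: field_simps)
  have a2: "A' = p * B / r" using assms(3,7) by (simp add: field_simps)
  show ?thesis unfolding a1 a2 using assms(1-5) by (simp add: field_simps)
qed

lemma RR_rec:
  fixes q t x y :: complex
  assumes q: "norm q < 1" and t0: "t \<noteq> 0" and t: "norm t < 1" and xt: "norm (x * t) < 1"
    and nz: "qpoch (y * t) q (Suc n) \<noteq> 0"
  shows "RR q x y t (Suc n) = (RR q x y t n - RR q x y (q * t) n) / t"
proof -
  have yt: "1 - y * t \<noteq> 0" using qpoch_factor_nz[OF nz, of 0] by simp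
  have t1: "1 - t \<noteq> 0" using t by auto
  have xt1: "1 - x * t \<noteq> 0" using xt by auto
  have Jt: "qpoch_inf (q * t) q \<noteq> 0" by (rule qpoch_inf_nz[OF q norm_qt(1)[OF q t]])
  have Jx: "qpoch_inf (x * (q * t)) q \<noteq> 0"
    by (rule qpoch_inf_nz[OF q]) (metis norm_qt(1)[OF q xt] mult.left_commute)
  have e1: "qpoch_inf t q = (1 - t) * qpoch_inf (q * t) q"
    using qinf_shift[OF q, of 1 t] by simp
  show ?thesis
    unfolding RR_def qinf_shift[OF q, of y t] qinf_shift[OF q, of x t] e1
    by (rule alg_RR[OF t0 t1 xt1 Jt Jx AA_step[OF q nz] AA_q[OF yt]])
qed

lemma alg_FF:
  fixes t X Y Q Jx Jy P E C Wn a b :: complex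
  assumes "t \<noteq> 0" "Jx \<noteq> 0" "a \<noteq> 0" "b \<noteq> 0" "E \<noteq> 0" "Wn \<noteq> 0"
    and "b * C = E * Wn" "Wn - a = t * (X - Q * Y)"
  shows "b * Jy / (a * Jx) * (P * (X - Q * Y) / (E * Wn)) =
     1 / t * (b * Jy / (a * Jx) * (P / E)) + - 1 / t * (Jy / Jx * (P / C))"
proof -
  have c: "C = E * Wn / b" using assms(4,7) by (simp add: field_simps)
  have "1 / t * (b * Jy / (a * Jx) * (P / E)) + - 1 / t * (Jy / Jx * (P / C))
     = b * Jy / (a * Jx) * (P / (E * Wn)) * ((Wn - a) / t)"
    unfolding c using assms(1-6) by (simp add: field_simps)
  also have "\<dots> = b * Jy / (a * Jx) * (P * (X - Q * Y) / (E * Wn))"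
    unfolding assms(8) using assms(1) by simp
  finally show ?thesis ..
qed

lemma alg_D:
  fixes a b d t A K :: complex
  assumes "a \<noteq> 0" "K \<noteq> 0" "d \<noteq> 0" "b - a = t * d"
  shows "(t ^ k * (b * A / (a * K)) - t ^ k * (A / K)) / d = t ^ Suc k * (A / (a * K))"
proof -
  have "(t ^ k * (b * A / (a * K)) - t ^ k * (A / K)) / d = t ^ k * (A / (a * K)) * ((b - a) / d)"
    using assms(1-3) by (simp add: field_simps)
  also have "\<dots> = t ^ Suc k * (A / (a * K))" unfolding assms(4) using assms(3) by simp
  finally show ?thesis .
qed

lemma FF_rec:
  fixes q t X Y :: complex
  assumes q: "norm q < 1" and t0: "t \<noteq> 0" and Xt: "norm (X * t) < 1"
    and nz: "qpoch (Y * t) q (Suc n) \<noteq> 0"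
  shows "FF q t (Suc n) X Y = 1 / t * FF q t n X Y + - 1 / t * FF q (q * t) n X Y"
proof -
  have Yt: "1 - Y * t \<noteq> 0" using qpoch_factor_nz[OF nz, of 0] by simp
  have Xt1: "1 - X * t \<noteq> 0" using Xt by auto
  have Jx: "qpoch_inf (X * (q * t)) q \<noteq> 0"
    by (rule qpoch_inf_nz[OF q]) (metis norm_qt(1)[OF q Xt] mult.left_commute)
  have E: "qpoch (Y * t) q n \<noteq> 0" using qpoch_prefix_nz[OF nz] by simp
  have Wn: "1 - Y * t * q ^ n \<noteq> 0" using qpoch_factor_nz[OF nz, of n] by simp
  have C: "(1 - Y * t) * qpoch (Y * (q * t)) q n = qpoch (Y * t) q n * (1 - Y * t * q ^ n)"
    using qpoch_Suc'[of "Y * t" q n] qpoch_Suc[of "Y * t" q n] by (simp add: ac_simps)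
  show ?thesis
    unfolding FF_def qinf_shift[OF q, of Y t] qinf_shift[OF q, of X t] Pn_Suc qpoch_Suc
    by (rule alg_FF[OF t0 Jx Xt1 Yt E Wn C]) (simp add: algebra_simps)
qed

lemma FF0_D:
  fixes q t :: complex
  assumes q0: "q \<noteq> 0" and q: "norm q < 1"
  shows "Hx q X Y \<Longrightarrow> norm (X * t) < 1 \<Longrightarrow> (Dxy q ^^ k) (FF q t 0) X Y = t ^ k * FF q t 0 X Y"
proof (induction k arbitrary: X Y)
  case 0
  then show ?case by simp
next
  case (Suc k)
  note h = Hx_shift[OF Suc.prems(1)]
  have n2: "norm (q * X * t) < 1" using norm_qt(1)[OF q Suc.prems(2)] by (simp add: ac_simps)
  have K: "qpoch_inf (X * (q * t)) q \<noteq> 0"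
    by (rule qpoch_inf_nz[OF q]) (metis norm_qt(1)[OF q Suc.prems(2)] mult.left_commute)
  have Xt1: "1 - X * t \<noteq> 0" using Suc.prems(2) by auto
  have e1: "qpoch_inf (Y / q * t) q = (1 - Y / q * t) * qpoch_inf (Y * t) q"
    using qpoch_inf_Suc[OF q, of "Y / q * t"] q0 by (simp add: field_simps)
  have e2: "qpoch_inf (q * X * t) q = qpoch_inf (X * (q * t)) q" by (simp add: ac_simps)
  have "(Dxy q ^^ Suc k) (FF q t 0) X Y =
      (t ^ k * (qpoch_inf (Y / q * t) q / qpoch_inf (X * t) q) - t ^ k * (qpoch_inf (Y * t) q / qpoch_inf (q * X * t) q)) / (X - Y / q)"
    unfolding Dk_Suc Suc.IH[OF h(1) Suc.prems(2)] Suc.IH[OF h(2) n2] by (simp add: FF_def)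
  also have "\<dots> = t ^ Suc k * (qpoch_inf (Y * t) q / qpoch_inf (X * t) q)"
    unfolding e1 e2 qinf_shift[OF q, of X t]
    by (rule alg_D[OF Xt1 K h(3)]) (simp add: algebra_simps)
  finally show ?case by (simp add: FF_def)
qed

lemma base_case:
  fixes q t :: complex
  assumes q0: "q \<noteq> 0" and q: "norm q < 1" and t: "norm t < 1" and xt: "norm (x * t) < 1"
    and H: "Hx q x y"
  shows "Eterm q (FF q t 0) x y sums RR q x y t 0"
proof -
  have "(\<lambda>k. t ^ k / qpoch q q k * FF q t 0 x y) sums (1 / qpoch_inf t q * FF q t 0 x y)"
    by (rule sums_mult2[OF euler[OF q t]])
  moreover have "Eterm q (FF q t 0) x y = (\<lambda>k. t ^ k / qpoch q q k * FF q t 0 x y)"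
    by (rule ext) (simp add: Eterm_def FF0_D[OF q0 q H xt])
  moreover have "1 / qpoch_inf t q * FF q t 0 x y = RR q x y t 0"
    by (simp add: RR_def AA_def FF_def qbinom_0[OF q])
  ultimately show ?thesis by simp
qed


lemma main_ind:
  fixes q x y :: complex
  assumes q0: "q \<noteq> 0" and q: "norm q < 1" and H: "Hx q x y"
  shows "\<forall>t. t \<noteq> 0 \<longrightarrow> norm t < 1 \<longrightarrow> norm (x * t) < 1 \<longrightarrow> (\<forall>j::nat. qpoch (y * t / q ^ j) q n \<noteq> 0)
           \<longrightarrow> Eterm q (FF q t n) x y sums RR q x y t n"
proof (induction n)
  case 0
  show ?case using base_case[OF q0 q _ _ H] by blast
next
  case (Suc n)
  show ?case
  proof (intro allI impI)
    fix t :: complex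
    assume t0: "t \<noteq> 0" and t: "norm t < 1" and xt: "norm (x * t) < 1"
      and hj: "\<forall>j::nat. qpoch (y * t / q ^ j) q (Suc n) \<noteq> 0"
    have hj1: "\<forall>j::nat. qpoch (y * t / q ^ j) q n \<noteq> 0"
    proof
      fix j :: nat
      have "qpoch (y * t / q ^ j) q (Suc n) \<noteq> 0" using hj by blast
      thus "qpoch (y * t / q ^ j) q n \<noteq> 0" by (rule qpoch_prefix_nz) simp
    qed
    have hj2: "\<forall>j::nat. qpoch (y * (q * t) / q ^ j) q n \<noteq> 0"
    proof
      fix j :: nat
      show "qpoch (y * (q * t) / q ^ j) q n \<noteq> 0"
      proof (cases j)
        case 0
        have "qpoch (y * t) q (Suc n) \<noteq> 0" using hj[rule_format, of 0] by simp
        hence "(1 - y * t) * qpoch (y * t * q) q n \<noteq> 0" by (simp add: qpoch_Suc')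
        thus ?thesis using 0 by (simp add: ac_simps)
      next
        case (Suc j')
        have "y * (q * t) / q ^ j = y * t / q ^ j'" using Suc q0 by (simp add: field_simps)
        thus ?thesis using hj1 by simp
      qed
    qed
    have qt0: "q * t \<noteq> 0" using q0 t0 by simp
    have qt: "norm (q * t) < 1" by (rule norm_qt(1)[OF q t])
    have xqt: "norm (x * (q * t)) < 1" using norm_qt(1)[OF q xt] by (simp add: ac_simps)
    have S1: "Eterm q (FF q t n) x y sums RR q x y t n" using Suc.IH t0 t xt hj1 by blast
    have S2: "Eterm q (FF q (q * t) n) x y sums RR q x y (q * t) n" using Suc.IH qt0 qt xqt hj2 by blast
    have lin: "(Dxy q ^^ k) (FF q t (Suc n)) x y = 1 / t * (Dxy q ^^ k) (FF q t n) x y + - 1 / t * (Dxy q ^^ k) (FF q (q * t) n) x y" for k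
    proof (rule Dk_lin, intro allI)
      fix a b :: nat
      have n1: "norm (q ^ a * x * t) < 1" using norm_qt(2)[OF q xt, of a] by (simp add: ac_simps)
      have "y / q ^ b * t = y * t / q ^ b" by simp
      hence n2: "qpoch (y / q ^ b * t) q (Suc n) \<noteq> 0" using hj by simp
      show "FF q t (Suc n) (q ^ a * x) (y / q ^ b) = 1 / t * FF q t n (q ^ a * x) (y / q ^ b) + - 1 / t * FF q (q * t) n (q ^ a * x) (y / q ^ b)"
        by (rule FF_rec[OF q t0 n1 n2])
    qed
    have "(\<lambda>k. (Eterm q (FF q t n) x y k - Eterm q (FF q (q * t) n) x y k) / t) sums ((RR q x y t n - RR q x y (q * t) n) / t)"
      by (rule sums_divide[OF sums_diff[OF S1 S2]])
    moreover have "(\<lambda>k. (Eterm q (FF q t n) x y k - Eterm q (FF q (q * t) n) x y k) / t) = Eterm q (FF q t (Suc n)) x y"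
    proof (rule ext)
      fix k
      have "qpoch q q k \<noteq> 0" by (rule qpoch_q_nz[OF q])
      thus "(Eterm q (FF q t n) x y k - Eterm q (FF q (q * t) n) x y k) / t = Eterm q (FF q t (Suc n)) x y k"
        unfolding Eterm_def lin using t0 by (simp add: field_simps)
    qed
    moreover have "RR q x y t (Suc n) = (RR q x y t n - RR q x y (q * t) n) / t"
      by (rule RR_rec[OF q t0 t xt]) (use hj[rule_format, of 0] in simp)
    ultimately show "Eterm q (FF q t (Suc n)) x y sums RR q x y t (Suc n)" by simp
  qed
qed

lemma zero_case:
  fixes q x y :: complex
  assumes q0: "q \<noteq> 0" and q: "norm q < 1" and H: "Hx q x y"
  shows "Eterm q (FF q 0 n) x y sums RR q x y 0 n"
proof -
  have F: "FF q 0 n = Pn q n" by (rule ext, rule ext) (simp add: FF_def qpoch_inf_0)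
  have E: "Eterm q (Pn q n) x y k = (if k \<in> {..n} then qbinom q n k * Pn q (n - k) x y else 0)" for k
    using qpoch_q_nz[OF q, of k]
    by (simp add: Eterm_def D_Pn[OF q0 q H] qbinom_def)
  have "Eterm q (Pn q n) x y sums (\<Sum>k\<in>{..n}. Eterm q (Pn q n) x y k)"
    by (rule sums_finite) (auto simp: E)
  moreover have "(\<Sum>k\<in>{..n}. Eterm q (Pn q n) x y k) = SS q n x y"
    unfolding SS_def by (rule sum.cong) (auto simp: E)
  moreover have "RR q x y 0 n = VV q n x y"
    by (simp add: RR_def AA_def VV_def qpoch_inf_0 mult.assoc)
  ultimately show ?thesis using SS_VV[OF q] F by simp
qed

theorem lemma2p3:
  fixes q t x y :: complex and n :: nat
  assumes "q \<noteq> 0" and "norm q < 1"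
    and "norm t < 1" and "norm (x * t) < 1"
    and "\<forall>i j::nat. q ^ i * x \<noteq> y / q ^ (j + 1)"
    and "\<forall>j::nat. qpoch (y * t / q ^ j) q n \<noteq> 0"
  shows "Eterm q (\<lambda>x y. qpoch_inf (y * t) q / qpoch_inf (x * t) q * (Pn q n x y / qpoch (y * t) q n)) x y
           sums (qpoch_inf (y * t) q / (qpoch_inf t q * qpoch_inf (x * t) q) *
                 (\<Sum>k\<le>n. qbinom q n k * (qpoch y q k * qpoch (x * t) q k / qpoch (y * t) q k) * x ^ (n - k)))"
proof -
  have H: "Hx q x y" using assms(5) by (simp add: Hx_def)
  have "Eterm q (FF q t n) x y sums RR q x y t n"
  proof (cases "t = 0")
    case True
    thus ?thesis using zero_case[OF assms(1,2) H] by simp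
  next
    case False
    thus ?thesis using main_ind[OF assms(1,2) H] assms(3,4,6) by blast
  qed
  thus ?thesis by (simp add: FF_def RR_def AA_def)
qed

end
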